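(* For any $f\in LC(O,K)$, any integers $m\ge0$, $n\ge0$, and any $x\in O$, $$\big((\Delta-[m]I)^nf\big)(x)=\sum_{i=0}^n\sum_{j=i}^n(-1)^{n-i}\binom{n}{j}[m]^{n-j}f(T^ix)\,\mathcal{D}_i(T^j).$$
   Context: Let $q$ be a prime power, $K=\mathbf{F}_q((T))$, $O=\mathbf{F}_q[[T]]$, and $LC(O,K)$ the space of continuous $\mathbf{F}_q$-linear functions $O\to K$. Put $[m]=T^{q^m}-T$ (so $[0]=0$). Hasse derivatives: $\mathcal{D}_n(\sum_ia_iT^i)=\sum_i\binom{i}{n}a_iT^{i-n}$ (binomials in $\mathbf{F}_q$). The Carlitz difference operator $\Delta$ on $LC(O,K)$ is $(\Delta f)(x)=f(Tx)-Tf(x)$, and $I$ is the identity operator; $\binom{n}{j}$ is read in $\mathbf{F}_q$. *)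

theory Defs
  imports "HOL-Computational_Algebra.Formal_Laurent_Series" "HOL-Library.Cardinality"
begin

(* K = F_q((T)) is modelled as 'a fls for a finite field 'a (q = CARD('a)); T = fls_X. *)

definition Oring :: "'a::field fls set" where
  "Oring = {x. fls_subdegree x \<ge> 0}"

definition tcont_on_O :: "('a::field fls \<Rightarrow> 'a fls) \<Rightarrow> bool" where
  "tcont_on_O f \<longleftrightarrow> (\<forall>x\<in>Oring. \<forall>N::int. \<exists>M::int. \<forall>y\<in>Oring.
      (y = x \<or> fls_subdegree (y - x) \<ge> M) \<longrightarrow> (f y = f x \<or> fls_subdegree (f y - f x) \<ge> N))"

(* LC(O,K): continuous F_q-linear functions O -> K (only values on O matter) *)
definition LC :: "('a::{field,finite} fls \<Rightarrow> 'a fls) set" where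
  "LC = {f. (\<forall>x\<in>Oring. \<forall>y\<in>Oring. f (x + y) = f x + f y)
          \<and> (\<forall>c::'a. \<forall>x\<in>Oring. f (fls_const c * x) = fls_const c * f x)
          \<and> tcont_on_O f}"

definition bracket :: "nat \<Rightarrow> 'a::{field,finite} fls" where
  "bracket m = fls_X ^ (CARD('a) ^ m) - fls_X"

definition Delta :: "('a::field fls \<Rightarrow> 'a fls) \<Rightarrow> ('a fls \<Rightarrow> 'a fls)" where
  "Delta f = (\<lambda>x. f (fls_X * x) - fls_X * f x)"

definition DeltaM :: "nat \<Rightarrow> ('a::{field,finite} fls \<Rightarrow> 'a fls) \<Rightarrow> ('a fls \<Rightarrow> 'a fls)" where
  "DeltaM m f = (\<lambda>x. Delta f x - bracket m * f x)"

definition int_binom :: "int \<Rightarrow> nat \<Rightarrow> int" where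
  "int_binom i n = (if i \<ge> 0 then int (nat i choose n)
                    else (-1) ^ n * int ((nat (- i) + n - 1) choose n))"

definition hasse :: "nat \<Rightarrow> 'a::ring_1 fls \<Rightarrow> 'a fls" where
  "hasse n f = fls_shift (int n) (Abs_fls (\<lambda>i. of_int (int_binom i n) * fls_nth f i))"

end

theory Submission imports Defs begin
definition bsum :: "nat \<Rightarrow> 'r::comm_ring_1 \<Rightarrow> (nat \<Rightarrow> 'r) \<Rightarrow> 'r" where
  "bsum n c a = (\<Sum>i\<le>n. of_nat (n choose i) * c ^ (n - i) * a i)"

lemma bsum_Suc: "bsum (Suc n) c a = bsum n c (\<lambda>i. a (Suc i) + c * a i)"
proof -
  have A: "(\<Sum>i\<le>n. of_nat (n choose Suc i) * c ^ (n - i) * a (Suc i))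
      = (\<Sum>i\<le>n. of_nat (n choose i) * c ^ (Suc n - i) * a i) - c ^ Suc n * a 0"
  proof -
    have "(\<Sum>i\<le>Suc n. of_nat (n choose i) * c ^ (Suc n - i) * a i)
       = c ^ Suc n * a 0 + (\<Sum>i\<le>n. of_nat (n choose Suc i) * c ^ (n - i) * a (Suc i))"
      by (subst sum.atMost_Suc_shift) simp
    moreover have "(\<Sum>i\<le>Suc n. of_nat (n choose i) * c ^ (Suc n - i) * a i)
       = (\<Sum>i\<le>n. of_nat (n choose i) * c ^ (Suc n - i) * a i)" by (simp add: binomial_eq_0)
    ultimately show ?thesis by (simp add: algebra_simps)
  qed
  have "bsum (Suc n) c a = c ^ Suc n * a 0 + (\<Sum>i\<le>n. of_nat (Suc n choose Suc i) * c ^ (n - i) * a (Suc i))"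
    unfolding bsum_def by (subst sum.atMost_Suc_shift) simp
  also have "\<dots> = c ^ Suc n * a 0 + (\<Sum>i\<le>n. of_nat (n choose i) * c ^ (n - i) * a (Suc i))
      + (\<Sum>i\<le>n. of_nat (n choose Suc i) * c ^ (n - i) * a (Suc i))"
    by (simp add: sum.distrib algebra_simps)
  also have "\<dots> = (\<Sum>i\<le>n. of_nat (n choose i) * c ^ (n - i) * a (Suc i))
      + (\<Sum>i\<le>n. of_nat (n choose i) * c ^ (Suc n - i) * a i)"
    unfolding A by simp
  also have "\<dots> = bsum n c (\<lambda>i. a (Suc i) + c * a i)"
    unfolding bsum_def sum.distrib[symmetric]
    by (rule sum.cong) (auto simp: algebra_simps Suc_diff_le)
  finally show ?thesis .
qed

lemma iter_formula:
  "((DeltaM m ^^ n) f) x = bsum n (- (fls_X + bracket m)) (\<lambda>i. f (fls_X ^ i * x))"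
proof (induction n arbitrary: f x)
  case 0
  then show ?case by (simp add: bsum_def)
next
  case (Suc n)
  have "((DeltaM m ^^ Suc n) f) x = ((DeltaM m ^^ n) (DeltaM m f)) x"
    by (simp add: funpow_Suc_right del: funpow.simps)
  also have "\<dots> = bsum n (- (fls_X + bracket m)) (\<lambda>i. DeltaM m f (fls_X ^ i * x))"
    by (rule Suc.IH)
  also have "\<dots> = bsum (Suc n) (- (fls_X + bracket m)) (\<lambda>i. f (fls_X ^ i * x))"
    unfolding bsum_Suc DeltaM_def Delta_def
    by (simp add: algebra_simps)
  finally show ?case .
qed
lemma hasse_X_pow:
  assumes "i \<le> j"
  shows "hasse i (fls_X ^ j :: 'a::ring_1 fls) = of_nat (j choose i) * fls_X ^ (j - i)"
proof -
  have e: "(\<lambda>k. of_int (int_binom k i) * fls_nth (fls_X ^ j :: 'a fls) k)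
      = fls_nth (fls_const (of_nat (j choose i)) * fls_X ^ j :: 'a fls)"
    by (rule ext) (simp add: int_binom_def)
  show ?thesis unfolding hasse_def e fls_nth_inverse
    apply (rule fls_eqI)
    using assms by (auto simp: fls_of_nat_nth)
qed

lemma inner_sum:
  fixes b :: "'a::{field,finite} fls"
  assumes "i \<le> n"
  shows "(\<Sum>j=i..n. of_nat (n choose j) * b ^ (n - j) * hasse i (fls_X ^ j))
     = of_nat (n choose i) * (fls_X + b) ^ (n - i)"
proof -
  have "(\<Sum>j=i..n. of_nat (n choose j) * b ^ (n - j) * hasse i (fls_X ^ j))
      = (\<Sum>j=i..n. of_nat (n choose i) * (of_nat ((n - i) choose (j - i)) * fls_X ^ (j - i) * b ^ ((n - i) - (j - i))))"
  proof (rule sum.cong[OF refl])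
    fix j assume j: "j \<in> {i..n}"
    have "(n choose j) * (j choose i) = (n choose i) * ((n - i) choose (j - i))"
      using j choose_mult[of i j n] by simp
    hence c: "(of_nat (n choose j) * of_nat (j choose i) :: 'a fls) = of_nat (n choose i) * of_nat ((n - i) choose (j - i))"
      by (metis of_nat_mult)
    have "n - j = (n - i) - (j - i)" using j by auto
    thus "of_nat (n choose j) * b ^ (n - j) * hasse i (fls_X ^ j) =
      of_nat (n choose i) * (of_nat ((n - i) choose (j - i)) * fls_X ^ (j - i) * b ^ ((n - i) - (j - i)))"
    proof -
      have "of_nat (n choose j) * b ^ (n - j) * hasse i (fls_X ^ j) =
        (of_nat (n choose j) * of_nat (j choose i)) * (fls_X ^ (j - i) * b ^ (n - j))"
        using j by (simp add: hasse_X_pow algebra_simps)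
      also have "\<dots> = of_nat (n choose i) * (of_nat ((n - i) choose (j - i)) * fls_X ^ (j - i) * b ^ ((n - i) - (j - i)))"
        unfolding c using `n - j = (n - i) - (j - i)` by (simp only: mult.assoc)
      finally show ?thesis .
    qed
  qed
  also have "\<dots> = of_nat (n choose i) * (\<Sum>k=0..n-i. of_nat ((n - i) choose k) * fls_X ^ k * b ^ ((n - i) - k))"
    unfolding sum_distrib_left[symmetric]
    using sum.shift_bounds_cl_nat_ivl[of "\<lambda>j. of_nat ((n - i) choose (j - i)) * fls_X ^ (j - i) * b ^ ((n - i) - (j - i))" 0 i "n - i"] assms
    by simp
  also have "\<dots> = of_nat (n choose i) * (fls_X + b) ^ (n - i)"
    by (simp only: binomial_ring atLeast0AtMost)
  finally show ?thesis .
qed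

theorem corollary9:
  fixes f :: "'a::{field,finite} fls \<Rightarrow> 'a fls" and m n :: nat and x :: "'a fls"
  assumes "f \<in> LC" and "x \<in> Oring"
  shows "((DeltaM m ^^ n) f) x =
    (\<Sum>i=0..n. \<Sum>j=i..n. (-1) ^ (n - i) * of_nat (n choose j) * bracket m ^ (n - j)
        * f (fls_X ^ i * x) * hasse i (fls_X ^ j))"
proof -
  have "(\<Sum>i=0..n. \<Sum>j=i..n. (-1) ^ (n - i) * of_nat (n choose j) * bracket m ^ (n - j)
        * f (fls_X ^ i * x) * hasse i (fls_X ^ j))
     = (\<Sum>i=0..n. (-1) ^ (n - i) * f (fls_X ^ i * x) *
          (\<Sum>j=i..n. of_nat (n choose j) * bracket m ^ (n - j) * hasse i (fls_X ^ j)))"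
  proof (rule sum.cong[OF refl])
    fix i
    show "(\<Sum>j=i..n. (-1) ^ (n - i) * of_nat (n choose j) * bracket m ^ (n - j)
        * f (fls_X ^ i * x) * hasse i (fls_X ^ j)) = (-1) ^ (n - i) * f (fls_X ^ i * x) *
          (\<Sum>j=i..n. of_nat (n choose j) * bracket m ^ (n - j) * hasse i (fls_X ^ j))"
      unfolding sum_distrib_left by (rule sum.cong[OF refl]) (simp only: mult_ac)
  qed
  also have "\<dots> = (\<Sum>i=0..n. (-1) ^ (n - i) * f (fls_X ^ i * x) *
          (of_nat (n choose i) * (fls_X + bracket m) ^ (n - i)))"
    by (rule sum.cong[OF refl]) (simp add: inner_sum)
  also have "\<dots> = bsum n (- (fls_X + bracket m)) (\<lambda>i. f (fls_X ^ i * x))"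
    unfolding bsum_def atLeast0AtMost
    by (rule sum.cong[OF refl]) (simp only: power_minus[of "fls_X + bracket m"] mult_ac)
  finally show ?thesis unfolding iter_formula by (rule sym)
qed
end
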